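(* Let $P$ be a product rule. The $P$-product $*$ on $\mathbb Q\langle\langle\Sigma\rangle\rangle$ is bilinear, associative and commutative (BAC) if and only if $P$ is special, i.e. if and only if the following identities hold (where $\approx$ is term equivalence): \[ P(x+y,\dot x+\dot y,z,\dot z)\approx P(x,\dot x,z,\dot z)+P(y,\dot y,z,\dot z),\] \[ P(x,\dot x,\,y*z,\,P(y,\dot y,z,\dot z))\approx P(x*y,\,P(x,\dot x,y,\dot y),\,z,\dot z),\] \[ P(x,\dot x,y,\dot y)\approx P(y,\dot y,x,\dot x).\]
   Context: Let $\Sigma$ be a finite alphabet, $\Sigma^*$ the set of finite words with empty word $\varepsilon$. A series is a function $f:\Sigma^*\to\mathbb Q$; write $f_w=f(w)$; the set of series $\mathbb Q\langle\langle\Sigma\rangle\rangle$ is a $\mathbb Q$-vector space under pointwise scalar multiplication and addition, with zero series $\mathbb 0$. For $a\in\Sigma$ the left derivative $\delta_a f$ is the series $w\mapsto f(aw)$. Terms: for a set $X$ of variables, $\mathrm{Terms}(X)$ is the set of syntactic terms generated by $u,v::=x\mid 0\mid c\cdot u\mid u+v\mid u*v$ ($x\in X$, $c\in\mathbb Q$), with no identities imposed. A product rule is a term $P\in\mathrm{Terms}(\{x,\dot x,y,\dot y\})$; $P(s_1,s_2,s_3,s_4)$ denotes simultaneous substitution of $s_1,\dots,s_4$ for $x,\dot x,y,\dot y$. $P$-product: given a product rule $P$, the $P$-product $*$ on series and the semantics $[\![u]\!]_\varrho\in\mathbb Q\langle\langle\Sigma\rangle\rangle$ of terms $u$ under valuations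 $\varrho:X\to\mathbb Q\langle\langle\Sigma\rangle\rangle$ are the unique pair satisfying: $(f*g)_\varepsilon=f_\varepsilon g_\varepsilon$ and $\delta_a(f*g)=[\![P]\!]_{[x\mapsto f,\dot x\mapsto\delta_af,y\mapsto g,\dot y\mapsto\delta_ag]}$ for all $a\in\Sigma$ and series $f,g$; and $[\![0]\!]_\varrho=\mathbb 0$, $[\![x]\!]_\varrho=\varrho(x)$, $[\![c\cdot u]\!]_\varrho=c\cdot[\![u]\!]_\varrho$, $[\![u+v]\!]_\varrho=[\![u]\!]_\varrho+[\![v]\!]_\varrho$, $[\![u*v]\!]_\varrho=[\![u]\!]_\varrho*[\![v]\!]_\varrho$. BAC: the product is BAC if for all series $f,g,h$ and $c\in\mathbb Q$: $(f+g)*h=f*h+g*h$, $(c\cdot f)*g=c\cdot(f*g)$, $f*(g*h)=(f*g)*h$, $f*g=g*f$. Term equivalence: $u\approx v$ iff $u$ and $v$ denote the same polynomial of the commutative polynomial ring $\mathbb Q[X]$ when $0,c\cdot,+,*$ are read as the zero polynomial, scalar multiplication, addition and multiplication of polynomials (equivalently, $\approx$ is the smallest congruence on terms generated by the axioms of commutative, not necessarily unital, $\mathbb Q$-algebras). *)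

theory Defs
  imports Complex_Main "HOL-Library.Poly_Mapping"
begin

text \<open>The alphabet Sigma is a type variable of class finite (types are nonempty).
  A series is a function from words (lists) to rationals.\<close>

type_synonym 'a series = "'a list \<Rightarrow> rat"

definition zero_series :: "'a series" where
  "zero_series = (\<lambda>w. 0)"

definition add_series :: "'a series \<Rightarrow> 'a series \<Rightarrow> 'a series" where
  "add_series f g = (\<lambda>w. f w + g w)"

definition smult_series :: "rat \<Rightarrow> 'a series \<Rightarrow> 'a series" where
  "smult_series c f = (\<lambda>w. c * f w)"

definition lderiv :: "'a \<Rightarrow> 'a series \<Rightarrow> 'a series" where
  "lderiv a f = (\<lambda>w. f (a # w))"

datatype 'v trm =
    Var 'v
  | Zero
  | Scal rat "'v trm"
  | Plus "'v trm" "'v trm"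
  | Times "'v trm" "'v trm"

primrec subst :: "('v \<Rightarrow> 'w trm) \<Rightarrow> 'v trm \<Rightarrow> 'w trm" where
  "subst s (Var v) = s v"
| "subst s Zero = Zero"
| "subst s (Scal c u) = Scal c (subst s u)"
| "subst s (Plus u v) = Plus (subst s u) (subst s v)"
| "subst s (Times u v) = Times (subst s u) (subst s v)"

datatype pvar = PX | PDX | PY | PDY

type_synonym prule = "pvar trm"

definition inst :: "prule \<Rightarrow> 'w trm \<Rightarrow> 'w trm \<Rightarrow> 'w trm \<Rightarrow> 'w trm \<Rightarrow> 'w trm" where
  "inst P s1 s2 s3 s4 = subst (\<lambda>v. case v of PX \<Rightarrow> s1 | PDX \<Rightarrow> s2 | PY \<Rightarrow> s3 | PDY \<Rightarrow> s4) P"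

primrec sem :: "('a series \<Rightarrow> 'a series \<Rightarrow> 'a series) \<Rightarrow> ('v \<Rightarrow> 'a series) \<Rightarrow> 'v trm \<Rightarrow> 'a series" where
  "sem m \<rho> (Var v) = \<rho> v"
| "sem m \<rho> Zero = zero_series"
| "sem m \<rho> (Scal c u) = smult_series c (sem m \<rho> u)"
| "sem m \<rho> (Plus u v) = add_series (sem m \<rho> u) (sem m \<rho> v)"
| "sem m \<rho> (Times u v) = m (sem m \<rho> u) (sem m \<rho> v)"

definition is_Pproduct :: "prule \<Rightarrow> ('a series \<Rightarrow> 'a series \<Rightarrow> 'a series) \<Rightarrow> bool" where
  "is_Pproduct P m \<longleftrightarrow>
     (\<forall>f g. m f g [] = f [] * g []) \<and>
     (\<forall>a f g. lderiv a (m f g) =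
        sem m (\<lambda>v. case v of PX \<Rightarrow> f | PDX \<Rightarrow> lderiv a f | PY \<Rightarrow> g | PDY \<Rightarrow> lderiv a g) P)"

definition Pproduct :: "prule \<Rightarrow> 'a series \<Rightarrow> 'a series \<Rightarrow> 'a series" where
  "Pproduct P = (THE m. is_Pproduct P m)"

definition BAC :: "('a series \<Rightarrow> 'a series \<Rightarrow> 'a series) \<Rightarrow> bool" where
  "BAC m \<longleftrightarrow>
     (\<forall>f g h. m (add_series f g) h = add_series (m f h) (m g h)) \<and>
     (\<forall>c f g. m (smult_series c f) g = smult_series c (m f g)) \<and>
     (\<forall>f g h. m f (m g h) = m (m f g) h) \<and>
     (\<forall>f g. m f g = m g f)"

text \<open>Polynomials in variables 'v with rational coefficients: finitely supported
  maps from monomials (finitely supported exponent maps) to coefficients.\<close>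
type_synonym 'v mpoly = "('v \<Rightarrow>\<^sub>0 nat) \<Rightarrow>\<^sub>0 rat"

primrec poly_of :: "'v trm \<Rightarrow> 'v mpoly" where
  "poly_of (Var v) = Poly_Mapping.single (Poly_Mapping.single v 1) 1"
| "poly_of Zero = 0"
| "poly_of (Scal c u) = Poly_Mapping.single 0 c * poly_of u"
| "poly_of (Plus u v) = poly_of u + poly_of v"
| "poly_of (Times u v) = poly_of u * poly_of v"

definition term_equiv :: "'v trm \<Rightarrow> 'v trm \<Rightarrow> bool" (infix "\<approx>" 50) where
  "u \<approx> v \<longleftrightarrow> poly_of u = poly_of v"

datatype svar = SX | SDX | SY | SDY | SZ | SDZ

definition special :: "prule \<Rightarrow> bool" where
  "special P \<longleftrightarrow>
     inst P (Plus (Var SX) (Var SY)) (Plus (Var SDX) (Var SDY)) (Var SZ) (Var SDZ)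
       \<approx> Plus (inst P (Var SX) (Var SDX) (Var SZ) (Var SDZ))
              (inst P (Var SY) (Var SDY) (Var SZ) (Var SDZ)) \<and>
     inst P (Var SX) (Var SDX) (Times (Var SY) (Var SZ))
            (inst P (Var SY) (Var SDY) (Var SZ) (Var SDZ))
       \<approx> inst P (Times (Var SX) (Var SY)) (inst P (Var SX) (Var SDX) (Var SY) (Var SDY))
              (Var SZ) (Var SDZ) \<and>
     inst P (Var SX) (Var SDX) (Var SY) (Var SDY)
       \<approx> inst P (Var SY) (Var SDY) (Var SX) (Var SDX)"

end

theory Submission
  imports Defs "HOL-Computational_Algebra.Polynomial" "HOL-Library.Multiset"
begin

definition eqn :: "nat \<Rightarrow> 'a series \<Rightarrow> 'a series \<Rightarrow> bool" where
  "eqn k X Y \<longleftrightarrow> (\<forall>w. length w \<le> k \<longrightarrow> X w = Y w)"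

definition rho :: "'a \<Rightarrow> 'a series \<Rightarrow> 'a series \<Rightarrow> pvar \<Rightarrow> 'a series" where
  "rho a f g = (\<lambda>v. case v of PX \<Rightarrow> f | PDX \<Rightarrow> lderiv a f | PY \<Rightarrow> g | PDY \<Rightarrow> lderiv a g)"

lemma isP_alt: "is_Pproduct P m \<longleftrightarrow> (\<forall>f g. m f g [] = f [] * g []) \<and>
   (\<forall>a f g. lderiv a (m f g) = sem m (rho a f g) P)"
  by (simp add: is_Pproduct_def rho_def)

lemma eqn_refl[simp]: "eqn k X X" by (simp add: eqn_def)
lemma eqn_sym: "eqn k X Y \<Longrightarrow> eqn k Y X" by (simp add: eqn_def)
lemma eqn_trans[trans]: "eqn k X Y \<Longrightarrow> eqn k Y Z \<Longrightarrow> eqn k X Z" by (simp add: eqn_def)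
lemma eq_eqn_trans[trans]: "X = Y \<Longrightarrow> eqn k Y Z \<Longrightarrow> eqn k X Z" by simp
lemma eqn_eq_trans[trans]: "eqn k X Y \<Longrightarrow> Y = Z \<Longrightarrow> eqn k X Z" by simp
lemma eqn_le: "j \<le> k \<Longrightarrow> eqn k X Y \<Longrightarrow> eqn j X Y" by (simp add: eqn_def)
lemma eqn_lderiv: "eqn (Suc k) X Y \<Longrightarrow> eqn k (lderiv a X) (lderiv a Y)"
  by (simp add: eqn_def lderiv_def)
lemma eqn_rho: "eqn (Suc k) f f' \<Longrightarrow> eqn (Suc k) g g' \<Longrightarrow> eqn k (rho a f g v) (rho a f' g' v)"
  by (cases v) (auto simp: rho_def eqn_lderiv intro: eqn_le[of k "Suc k"])

lemma sem_cong:
  assumes "\<And>v. eqn k (\<rho> v) (\<rho>' v)"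
    and "\<And>X X' Y Y'. eqn k X X' \<Longrightarrow> eqn k Y Y' \<Longrightarrow> eqn k (m X Y) (m' X' Y')"
  shows "eqn k (sem m \<rho> u) (sem m' \<rho>' u)"
proof (induction u)
  case (Times u v)
  then show ?case by (simp add: assms(2))
qed (auto simp: eqn_def zero_series_def add_series_def smult_series_def assms(1)[unfolded eqn_def])

primrec approx :: "prule \<Rightarrow> nat \<Rightarrow> 'a series \<Rightarrow> 'a series \<Rightarrow> 'a series" where
  "approx P 0 f g = (\<lambda>w. f [] * g [])"
| "approx P (Suc k) f g = (\<lambda>w. case w of [] \<Rightarrow> f [] * g [] | a # w' \<Rightarrow> sem (approx P k) (rho a f g) P w')"

lemma approx_nil: "approx P i f g [] = f [] * g []" by (cases i) auto

lemma approx_cong: "k \<le> i \<Longrightarrow> k \<le> j \<Longrightarrow> eqn k X X' \<Longrightarrow> eqn k Y Y' \<Longrightarrow>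
   eqn k (approx P i X Y) (approx P j X' Y')"
proof (induction k arbitrary: i j X X' Y Y')
  case 0
  then show ?case by (simp add: eqn_def approx_nil)
next
  case (Suc k)
  obtain i' j' where i: "i = Suc i'" and j: "j = Suc j'" and ij: "k \<le> i'" "k \<le> j'"
    using Suc.prems by (cases i; cases j) auto
  have S: "eqn k (sem (approx P i') (rho a X Y) P) (sem (approx P j') (rho a X' Y') P)" for a
    by (rule sem_cong) (auto intro: eqn_rho Suc.prems Suc.IH ij)
  show ?case unfolding eqn_def
  proof (intro allI impI)
    fix w :: "'a list" assume "length w \<le> Suc k"
    show "approx P i X Y w = approx P j X' Y' w"
    proof (cases w)
      case Nil then show ?thesis using Suc.prems by (simp add: approx_nil eqn_def)
    next
      case (Cons a w')
      then show ?thesis using S[of a] \<open>length w \<le> Suc k\<close> by (simp add: i j eqn_def)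
    qed
  qed
qed

definition pm :: "prule \<Rightarrow> 'a series \<Rightarrow> 'a series \<Rightarrow> 'a series" where
  "pm P f g = (\<lambda>w. approx P (length w) f g w)"

lemma pm_approx:
  assumes A: "eqn k X X'" "eqn k Y Y'"
  shows "eqn k (pm P X Y) (approx P k X' Y')"
proof -
  have "pm P X Y w = approx P k X' Y' w" if l: "length w \<le> k" for w
  proof -
    have "eqn (length w) (approx P (length w) X Y) (approx P k X' Y')"
      using eqn_le[OF l A(1)] eqn_le[OF l A(2)] l by (intro approx_cong) auto
    then show ?thesis by (simp add: eqn_def pm_def)
  qed
  then show ?thesis by (simp add: eqn_def)
qed

lemma pm_is: "is_Pproduct P (pm P)"
  unfolding isP_alt
proof (intro conjI allI)
  fix f g :: "'a series" show "pm P f g [] = f [] * g []" by (simp add: pm_def approx_nil)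
next
  fix a and f g :: "'a series"
  show "lderiv a (pm P f g) = sem (pm P) (rho a f g) P"
  proof
    fix w :: "'a list"
    have "eqn (length w) (sem (pm P) (rho a f g) P) (sem (approx P (length w)) (rho a f g) P)"
      by (rule sem_cong) (auto intro: pm_approx)
    then show "lderiv a (pm P f g) w = sem (pm P) (rho a f g) P w"
      by (simp add: lderiv_def pm_def eqn_def)
  qed
qed

lemma isP_unique_eqn:
  assumes m1: "is_Pproduct P m1" and m2: "is_Pproduct P m2"
  shows "eqn k X X' \<Longrightarrow> eqn k Y Y' \<Longrightarrow> eqn k (m1 X Y) (m2 X' Y')"
proof (induction k arbitrary: X X' Y Y')
  case 0
  then show ?case using m1 m2 by (simp add: eqn_def isP_alt)
next
  case (Suc k)
  have S: "eqn k (sem m1 (rho a X Y) P) (sem m2 (rho a X' Y') P)" for a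
    by (rule sem_cong) (auto intro: eqn_rho Suc.prems Suc.IH)
  show ?case unfolding eqn_def
  proof (intro allI impI)
    fix w :: "'a list" assume l: "length w \<le> Suc k"
    show "m1 X Y w = m2 X' Y' w"
    proof (cases w)
      case Nil then show ?thesis using Suc.prems m1 m2 by (simp add: eqn_def isP_alt)
    next
      case (Cons a w')
      have "m1 X Y w = lderiv a (m1 X Y) w'" by (simp add: Cons lderiv_def)
      also have "\<dots> = sem m1 (rho a X Y) P w'" using m1 by (simp add: isP_alt)
      also have "\<dots> = sem m2 (rho a X' Y') P w'" using S[of a] l Cons by (simp add: eqn_def)
      also have "\<dots> = lderiv a (m2 X' Y') w'" using m2 by (simp add: isP_alt)
      finally show ?thesis by (simp add: Cons lderiv_def)
    qed
  qed
qed

lemma isP_unique: "is_Pproduct P m1 \<Longrightarrow> is_Pproduct P m2 \<Longrightarrow> m1 = m2"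
  apply (intro ext)
  subgoal for X Y w using isP_unique_eqn[of P m1 m2 "length w" X X Y Y] by (simp add: eqn_def)
  done

lemma Pproduct_is: "is_Pproduct P (Pproduct P)"
  unfolding Pproduct_def by (rule theI[of _ "pm P"]) (auto intro: pm_is isP_unique)

lemma Pcong: "eqn k X X' \<Longrightarrow> eqn k Y Y' \<Longrightarrow> eqn k (Pproduct P X Y) (Pproduct P X' Y')"
  using isP_unique_eqn[OF Pproduct_is Pproduct_is] .

section \<open>Normal forms\<close>

type_synonym 'v nfl = "('v list \<times> rat) list"

definition mon :: "'v list \<Rightarrow> ('v \<Rightarrow>\<^sub>0 nat)" where
  "mon xs = sum_list (map (\<lambda>x. Poly_Mapping.single x 1) xs)"

definition toP :: "'v nfl \<Rightarrow> 'v mpoly" where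
  "toP L = sum_list (map (\<lambda>(xs,c). Poly_Mapping.single (mon xs) c) L)"

definition prodL :: "'v nfl \<Rightarrow> 'v nfl \<Rightarrow> 'v nfl" where
  "prodL L1 L2 = concat (map (\<lambda>(xs,c). map (\<lambda>(ys,d). (xs @ ys, c * d)) L2) L1)"

definition scaleL :: "rat \<Rightarrow> 'v nfl \<Rightarrow> 'v nfl" where
  "scaleL c L = map (\<lambda>(xs,d). (xs, c * d)) L"

primrec nf :: "'v trm \<Rightarrow> 'v nfl" where
  "nf (Var v) = [([v], 1)]"
| "nf Zero = []"
| "nf (Scal c u) = scaleL c (nf u)"
| "nf (Plus u v) = nf u @ nf v"
| "nf (Times u v) = prodL (nf u) (nf v)"

lemma mon_append[simp]: "mon (xs @ ys) = mon xs + mon ys"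
  by (simp add: mon_def)

lemma toP_Nil[simp]: "toP [] = 0" by (simp add: toP_def)
lemma toP_Cons[simp]: "toP ((xs,c) # L) = Poly_Mapping.single (mon xs) c + toP L"
  by (simp add: toP_def)
lemma toP_append[simp]: "toP (A @ B) = toP A + toP B"
  by (simp add: toP_def)

lemma toP_scale: "toP (scaleL c L) = Poly_Mapping.single 0 c * toP L"
  by (induction L) (auto simp: scaleL_def distrib_left mult_single)

lemma toP_prod1: "toP (map (\<lambda>(ys,d). (xs @ ys, c * d)) L2) = Poly_Mapping.single (mon xs) c * toP L2"
  by (induction L2) (auto simp: distrib_left mult_single)

lemma prodL_Nil[simp]: "prodL [] L = []" by (simp add: prodL_def)
lemma prodL_Cons[simp]: "prodL ((xs,c) # L1) L2 = map (\<lambda>(ys,d). (xs @ ys, c * d)) L2 @ prodL L1 L2"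
  by (simp add: prodL_def)

lemma toP_prod: "toP (prodL L1 L2) = toP L1 * toP L2"
  by (induction L1) (auto simp: toP_prod1 distrib_right)

lemma toP_nf: "toP (nf u) = poly_of u"
  by (induction u) (auto simp: toP_scale toP_prod mon_def)

lemma nf_nonempty: "(xs, c) \<in> set (nf u) \<Longrightarrow> xs \<noteq> []"
  by (induction u arbitrary: xs c) (auto simp: scaleL_def prodL_def)

primrec evQ :: "('v \<Rightarrow> rat) \<Rightarrow> 'v trm \<Rightarrow> rat" where
  "evQ \<rho> (Var v) = \<rho> v"
| "evQ \<rho> Zero = 0"
| "evQ \<rho> (Scal c u) = c * evQ \<rho> u"
| "evQ \<rho> (Plus u v) = evQ \<rho> u + evQ \<rho> v"
| "evQ \<rho> (Times u v) = evQ \<rho> u * evQ \<rho> v"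

definition evLQ :: "('v \<Rightarrow> rat) \<Rightarrow> 'v nfl \<Rightarrow> rat" where
  "evLQ \<rho> L = sum_list (map (\<lambda>(xs,c). c * prod_list (map \<rho> xs)) L)"

lemma evLQ_Nil[simp]: "evLQ \<rho> [] = 0" by (simp add: evLQ_def)
lemma evLQ_Cons[simp]: "evLQ \<rho> ((xs,c) # L) = c * prod_list (map \<rho> xs) + evLQ \<rho> L"
  by (simp add: evLQ_def)
lemma evLQ_append[simp]: "evLQ \<rho> (A @ B) = evLQ \<rho> A + evLQ \<rho> B"
  by (simp add: evLQ_def)

lemma evLQ_scale: "evLQ \<rho> (scaleL c L) = c * evLQ \<rho> L"
  by (induction L) (auto simp: scaleL_def algebra_simps)

lemma evLQ_prod1: "evLQ \<rho> (map (\<lambda>(ys,d). (xs @ ys, c * d)) L2) = c * prod_list (map \<rho> xs) * evLQ \<rho> L2"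
  by (induction L2) (auto simp: algebra_simps)

lemma evLQ_prod: "evLQ \<rho> (prodL L1 L2) = evLQ \<rho> L1 * evLQ \<rho> L2"
  by (induction L1) (auto simp: evLQ_prod1 algebra_simps)

lemma evQ_nf: "evQ \<rho> u = evLQ \<rho> (nf u)"
  by (induction u) (auto simp: evLQ_scale evLQ_prod)

lemma evQ_subst: "evQ \<rho> (subst s u) = evQ (\<lambda>v. evQ \<rho> (s v)) u"
  by (induction u) auto

lemma sem_subst: "sem m \<rho> (subst s u) = sem m (\<lambda>v. sem m \<rho> (s v)) u"
  by (induction u) auto

lemma sem_nil: "(\<And>f g. m f g [] = f [] * g []) \<Longrightarrow> sem m \<rho> u [] = evQ (\<lambda>v. \<rho> v []) u"
  by (induction u) (auto simp: zero_series_def add_series_def smult_series_def)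

section \<open>Polynomial identity\<close>

lemma single_Suc: "Poly_Mapping.single x (Suc n) = Poly_Mapping.single x 1 + Poly_Mapping.single x n"
  by (simp add: single_add[symmetric])

lemma mon_count: "mon xs = Poly_Mapping.single x (count_list xs x) + mon (filter (\<lambda>y. y \<noteq> x) xs)"
proof (induction xs)
  case (Cons a xs)
  then show ?case by (auto simp: mon_def single_Suc[of x "count_list xs x"] add_ac)
qed (simp add: mon_def)

lemma prod_count: "prod_list (map \<rho> xs) = (\<rho> x ^ count_list xs x * prod_list (map \<rho> (filter (\<lambda>y. y \<noteq> x) xs)) :: rat)"
proof (induction xs)
  case (Cons a xs)
  then show ?case by (cases "a = x") (simp_all add: mult.left_commute mult.assoc)
qed simp

lemma count_le_len: "count_list xs x \<le> length xs"
  by (induction xs) auto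

lemma sum_list_group:
  fixes f :: "'e \<Rightarrow> 'b::comm_monoid_add"
  shows "(\<forall>e\<in>set L. key e \<le> (K::nat)) \<Longrightarrow>
    sum_list (map f L) = (\<Sum>k\<le>K. sum_list (map f (filter (\<lambda>e. key e = k) L)))"
proof (induction L)
  case Nil then show ?case by simp
next
  case (Cons e L)
  have "(\<Sum>k\<le>K. sum_list (map f (filter (\<lambda>e. key e = k) (e # L)))) =
        (\<Sum>k\<le>K. (if key e = k then f e else 0) + sum_list (map f (filter (\<lambda>e. key e = k) L)))"
    by (rule sum.cong) simp_all
  also have "\<dots> = (\<Sum>k\<le>K. (if key e = k then f e else 0)) + (\<Sum>k\<le>K. sum_list (map f (filter (\<lambda>e. key e = k) L)))"
    by (rule sum.distrib)
  also have "(\<Sum>k\<le>K. (if key e = k then f e else 0)) = f e"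
    using Cons.prems by (simp add: sum.delta)
  finally show ?case using Cons by simp
qed

lemma evLQ_cong: "(\<And>xs c y. (xs, c) \<in> set L \<Longrightarrow> y \<in> set xs \<Longrightarrow> \<rho> y = \<rho>' y) \<Longrightarrow> evLQ \<rho> L = evLQ \<rho>' L"
proof (induction L)
  case (Cons a L)
  then show ?case
    by (cases a) (simp, metis (mono_tags, lifting) list.set_intros(1) map_eq_conv)
qed simp

lemma toP_nilvars: "(\<And>xs c. (xs, c) \<in> set L \<Longrightarrow> xs = []) \<Longrightarrow> toP L = Poly_Mapping.single 0 (evLQ \<rho> L)"
proof (induction L)
  case (Cons a L)
  obtain xs c where a: "a = (xs, c)" by (cases a)
  have "xs = []" using Cons.prems a by auto
  moreover have "toP L = Poly_Mapping.single 0 (evLQ \<rho> L)"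
    using Cons.IH Cons.prems by (meson list.set_intros(2))
  ultimately show ?case using a by (simp add: single_add mon_def)
qed simp

definition strip :: "'v \<Rightarrow> 'v nfl \<Rightarrow> nat \<Rightarrow> 'v nfl" where
  "strip x L k = map (\<lambda>(xs,c). (filter (\<lambda>y. y \<noteq> x) xs, c)) (filter (\<lambda>e. count_list (fst e) x = k) L)"

lemma evLQ_strip_aux: "(\<forall>(xs,c)\<in>set L. count_list xs x = k) \<Longrightarrow>
  evLQ \<rho> L = \<rho> x ^ k * evLQ \<rho> (map (\<lambda>(xs,c). (filter (\<lambda>y. y \<noteq> x) xs, c)) L)"
proof (induction L)
  case (Cons a L)
  obtain xs c where a: "a = (xs, c)" by (cases a)
  have k: "count_list xs x = k" using Cons.prems a by auto
  have "prod_list (map \<rho> xs) = \<rho> x ^ k * prod_list (map \<rho> (filter (\<lambda>y. y \<noteq> x) xs))"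
    using prod_count[of \<rho> xs x] k by simp
  then show ?case using Cons a by (simp add: algebra_simps)
qed simp

lemma toP_strip_aux: "(\<forall>(xs,c)\<in>set L. count_list xs x = k) \<Longrightarrow>
  toP L = Poly_Mapping.single (Poly_Mapping.single x k) 1 * toP (map (\<lambda>(xs,c). (filter (\<lambda>y. y \<noteq> x) xs, c)) L)"
proof (induction L)
  case (Cons a L)
  obtain xs c where a: "a = (xs, c)" by (cases a)
  have k: "count_list xs x = k" using Cons.prems a by auto
  have "Poly_Mapping.single (mon xs) c = Poly_Mapping.single (Poly_Mapping.single x k) 1 *
      Poly_Mapping.single (mon (filter (\<lambda>y. y \<noteq> x) xs)) c"
    using mon_count[of xs x] k by (simp add: mult_single)
  then show ?case using Cons a by (simp add: distrib_left)
qed simp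

lemma polyid_aux:
  assumes "finite V"
  shows "\<forall>L. (\<forall>(xs,c)\<in>set L. set xs \<subseteq> V) \<longrightarrow> (\<forall>\<rho>. evLQ \<rho> L = 0) \<longrightarrow> toP (L :: 'v nfl) = 0"
  using assms
proof (induction V rule: finite_induct)
  case empty
  show ?case
  proof (intro allI impI)
    fix L :: "'v nfl" assume A: "\<forall>(xs,c)\<in>set L. set xs \<subseteq> {}" and Z: "\<forall>\<rho>. evLQ \<rho> L = 0"
    have "toP L = Poly_Mapping.single 0 (evLQ (\<lambda>_. 0) L)"
      by (rule toP_nilvars) (use A in auto)
    then show "toP L = 0" using Z by simp
  qed
next
  case (insert x V)
  show ?case
  proof (intro allI impI)
    fix L :: "'v nfl" assume A: "\<forall>(xs,c)\<in>set L. set xs \<subseteq> insert x V" and Z: "\<forall>\<rho>. evLQ \<rho> L = 0"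
    define K where "K = sum_list (map (\<lambda>(xs,c). length xs) L)"
    have keyK: "\<forall>e\<in>set L. count_list (fst e) x \<le> K"
    proof
      fix e assume e: "e \<in> set L"
      obtain xs c where ee: "e = (xs, c)" by (cases e)
      have "length xs \<in> set (map (\<lambda>(xs,c). length xs) L)" using e ee by force
      then have "length xs \<le> K" unfolding K_def by (rule member_le_sum_list) simp
      then show "count_list (fst e) x \<le> K" using count_le_len[of xs x] ee by simp
    qed
    have F1: "evLQ \<rho> L = (\<Sum>k\<le>K. \<rho> x ^ k * evLQ \<rho> (strip x L k))" for \<rho>
    proof -
      have "evLQ \<rho> L = (\<Sum>k\<le>K. evLQ \<rho> (filter (\<lambda>e. count_list (fst e) x = k) L))"
        unfolding evLQ_def by (rule sum_list_group[OF keyK])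
      also have "\<dots> = (\<Sum>k\<le>K. \<rho> x ^ k * evLQ \<rho> (strip x L k))"
        unfolding strip_def by (rule sum.cong[OF refl], rule evLQ_strip_aux) auto
      finally show ?thesis .
    qed
    have F2: "toP L = (\<Sum>k\<le>K. Poly_Mapping.single (Poly_Mapping.single x k) 1 * toP (strip x L k))"
    proof -
      have "toP L = (\<Sum>k\<le>K. toP (filter (\<lambda>e. count_list (fst e) x = k) L))"
        unfolding toP_def by (rule sum_list_group[OF keyK])
      also have "\<dots> = (\<Sum>k\<le>K. Poly_Mapping.single (Poly_Mapping.single x k) 1 * toP (strip x L k))"
        unfolding strip_def by (rule sum.cong[OF refl], rule toP_strip_aux) auto
      finally show ?thesis .
    qed
    have F3: "evLQ (\<rho>(x := t)) (strip x L k) = evLQ \<rho> (strip x L k)" for \<rho> t k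
      by (rule evLQ_cong) (auto simp: strip_def)
    have Sk: "evLQ \<rho> (strip x L k) = 0" if "k \<le> K" for \<rho> k
    proof -
      define q where "q = (\<Sum>k\<le>K. monom (evLQ \<rho> (strip x L k)) k)"
      have "poly q t = 0" for t
      proof -
        have "poly q t = (\<Sum>k\<le>K. t ^ k * evLQ \<rho> (strip x L k))"
          by (simp add: q_def poly_sum poly_monom mult.commute)
        also have "\<dots> = evLQ (\<rho>(x := t)) L" using F1[of "\<rho>(x := t)"] F3 by simp
        finally show ?thesis using Z by simp
      qed
      then have "q = 0" using poly_all_0_iff_0 by blast
      then have "coeff q k = 0" by simp
      then show ?thesis using that by (simp add: q_def coeff_sum)
    qed
    have "toP (strip x L k) = 0" if "k \<le> K" for k
    proof -
      have "\<forall>(xs,c)\<in>set (strip x L k). set xs \<subseteq> V"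
        using A by (auto simp: strip_def)
      then show ?thesis using insert.IH Sk[OF that] by blast
    qed
    then show "toP L = 0" using F2 by simp
  qed
qed

definition negL :: "'v nfl \<Rightarrow> 'v nfl" where
  "negL L = map (\<lambda>(xs,c). (xs, - c)) L"

lemma toP_neg: "toP (negL L) = - toP L"
  by (induction L) (auto simp: negL_def single_uminus)

lemma evLQ_neg: "evLQ \<rho> (negL L) = - evLQ \<rho> L"
  by (induction L) (auto simp: negL_def)

lemma poly_of_eqI:
  assumes "\<And>\<rho>. evQ \<rho> u = evQ \<rho> (v :: 'v trm)"
  shows "poly_of u = poly_of v"
proof -
  define L where "L = nf u @ negL (nf v)"
  define V where "V = (\<Union>e\<in>set L. set (fst e))"
  have "finite V" by (simp add: V_def)
  moreover have "\<forall>(xs,c)\<in>set L. set xs \<subseteq> V" by (auto simp: V_def)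
  moreover have "\<forall>\<rho>. evLQ \<rho> L = 0" using assms by (simp add: L_def evLQ_neg evQ_nf)
  ultimately have "toP L = 0" using polyid_aux by blast
  then show ?thesis by (simp add: L_def toP_neg toP_nf)
qed

section \<open>Series algebra up to level n\<close>

lemma eqn_add: "eqn k X X' \<Longrightarrow> eqn k Y Y' \<Longrightarrow> eqn k (add_series X Y) (add_series X' Y')"
  by (simp add: eqn_def add_series_def)

lemma eqn_smult: "eqn k X X' \<Longrightarrow> eqn k (smult_series c X) (smult_series c X')"
  by (simp add: eqn_def smult_series_def)

fun mprod :: "('a series \<Rightarrow> 'a series \<Rightarrow> 'a series) \<Rightarrow> ('v \<Rightarrow> 'a series) \<Rightarrow> 'v list \<Rightarrow> 'a series" where
  "mprod m \<rho> [] = zero_series"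
| "mprod m \<rho> [x] = \<rho> x"
| "mprod m \<rho> (x # y # ys) = m (\<rho> x) (mprod m \<rho> (y # ys))"

lemma mprod_Cons: "xs \<noteq> [] \<Longrightarrow> mprod m \<rho> (x # xs) = m (\<rho> x) (mprod m \<rho> xs)"
  by (cases xs) auto

definition evS :: "('a series \<Rightarrow> 'a series \<Rightarrow> 'a series) \<Rightarrow> ('v \<Rightarrow> 'a series) \<Rightarrow> 'v nfl \<Rightarrow> 'a series" where
  "evS m \<rho> L = (\<lambda>w. sum_list (map (\<lambda>(xs,c). c * mprod m \<rho> xs w) L))"

lemma evS_Nil: "evS m \<rho> [] = zero_series" by (simp add: evS_def zero_series_def)
lemma evS_Cons: "evS m \<rho> ((xs,c) # L) = add_series (smult_series c (mprod m \<rho> xs)) (evS m \<rho> L)"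
  by (simp add: evS_def add_series_def smult_series_def)
lemma evS_append: "evS m \<rho> (A @ B) = add_series (evS m \<rho> A) (evS m \<rho> B)"
  by (simp add: evS_def add_series_def)
lemma evS_scale: "evS m \<rho> (scaleL c L) = smult_series c (evS m \<rho> L)"
  by (induction L) (auto simp: scaleL_def evS_Cons evS_Nil add_series_def smult_series_def zero_series_def algebra_simps)
lemma evS_neg: "evS m \<rho> (negL L) w = - evS m \<rho> L w"
  by (induction L) (auto simp: negL_def evS_def)

lemma smult_zero_series[simp]: "smult_series c zero_series = zero_series"
  by (simp add: smult_series_def zero_series_def)
lemma smult_0_series[simp]: "smult_series 0 f = zero_series"
  by (simp add: smult_series_def zero_series_def)

lemma sum_list_partition:
  fixes f :: "'e \<Rightarrow> 'b::comm_monoid_add"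
  shows "sum_list (map f L) = sum_list (map f (filter p L)) + sum_list (map f (filter (\<lambda>e. \<not> p e) L))"
  by (induction L) (auto simp: add_ac)

lemma toP_partition: "toP L = toP (filter p L) + toP (filter (\<lambda>e. \<not> p e) L)"
  unfolding toP_def by (rule sum_list_partition)

lemma evS_partition: "evS m \<rho> L w = evS m \<rho> (filter p L) w + evS m \<rho> (filter (\<lambda>e. \<not> p e) L) w"
  unfolding evS_def by (simp only: sum_list_partition[of _ L p])

lemma toP_same: "(\<forall>e\<in>set S. mon (fst e) = \<alpha>) \<Longrightarrow> toP S = Poly_Mapping.single \<alpha> (sum_list (map snd S))"
  by (induction S) (auto simp: single_add)

lemma lookup_toP_other: "(\<forall>e\<in>set R. mon (fst e) \<noteq> \<alpha>) \<Longrightarrow> Poly_Mapping.lookup (toP R) \<alpha> = 0"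
  by (induction R) (auto simp: lookup_add lookup_single_not_eq)

lemma lookup_mon: "Poly_Mapping.lookup (mon xs) v = count_list xs v"
  by (induction xs) (auto simp: mon_def lookup_add lookup_single)

lemma mon_mset: "mon xs = mon ys \<Longrightarrow> mset xs = mset ys"
  by (rule multiset_eqI) (metis count_mset lookup_mon)

locale nalg =
  fixes n :: nat and m :: "'a series \<Rightarrow> 'a series \<Rightarrow> 'a series"
  assumes cg: "\<And>X X' Y Y'. eqn n X X' \<Longrightarrow> eqn n Y Y' \<Longrightarrow> eqn n (m X Y) (m X' Y')"
    and addL: "\<And>f g h. eqn n (m (add_series f g) h) (add_series (m f h) (m g h))"
    and scL: "\<And>c f g. eqn n (m (smult_series c f) g) (smult_series c (m f g))"
    and assoc: "\<And>f g h. eqn n (m f (m g h)) (m (m f g) h)"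
    and comm: "\<And>f g. eqn n (m f g) (m g f)"
begin

lemma cgL: "eqn n X X' \<Longrightarrow> eqn n (m X Y) (m X' Y)" by (rule cg) simp_all
lemma cgR: "eqn n Y Y' \<Longrightarrow> eqn n (m X Y) (m X Y')" by (rule cg) simp_all

lemma addR: "eqn n (m h (add_series f g)) (add_series (m h f) (m h g))"
proof -
  have "eqn n (m h (add_series f g)) (m (add_series f g) h)" by (rule comm)
  also have "eqn n (m (add_series f g) h) (add_series (m f h) (m g h))" by (rule addL)
  also have "eqn n (add_series (m f h) (m g h)) (add_series (m h f) (m h g))" by (intro eqn_add comm)
  finally show ?thesis .
qed

lemma scR: "eqn n (m g (smult_series c f)) (smult_series c (m g f))"
proof -
  have "eqn n (m g (smult_series c f)) (m (smult_series c f) g)" by (rule comm)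
  also have "eqn n (m (smult_series c f) g) (smult_series c (m f g))" by (rule scL)
  also have "eqn n (smult_series c (m f g)) (smult_series c (m g f))" by (intro eqn_smult comm)
  finally show ?thesis .
qed

lemma zeroL: "eqn n (m zero_series X) zero_series"
  using scL[of 0 zero_series X] by simp

lemma zeroR: "eqn n (m X zero_series) zero_series"
  using eqn_trans[OF comm zeroL] .

lemma mprod_append: "xs \<noteq> [] \<Longrightarrow> ys \<noteq> [] \<Longrightarrow> eqn n (mprod m \<rho> (xs @ ys)) (m (mprod m \<rho> xs) (mprod m \<rho> ys))"
proof (induction xs)
  case Nil then show ?case by simp
next
  case (Cons x xs)
  show ?case
  proof (cases "xs = []")
    case True then show ?thesis using Cons.prems by (simp add: mprod_Cons)
  next
    case False
    have "mprod m \<rho> ((x # xs) @ ys) = m (\<rho> x) (mprod m \<rho> (xs @ ys))"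
      using False by (simp add: mprod_Cons)
    also have "eqn n (m (\<rho> x) (mprod m \<rho> (xs @ ys))) (m (\<rho> x) (m (mprod m \<rho> xs) (mprod m \<rho> ys)))"
      using Cons False by (intro cgR) simp
    also have "eqn n (m (\<rho> x) (m (mprod m \<rho> xs) (mprod m \<rho> ys))) (m (m (\<rho> x) (mprod m \<rho> xs)) (mprod m \<rho> ys))"
      by (rule assoc)
    also have "m (m (\<rho> x) (mprod m \<rho> xs)) (mprod m \<rho> ys) = m (mprod m \<rho> (x # xs)) (mprod m \<rho> ys)"
      using False by (simp add: mprod_Cons)
    finally show ?thesis .
  qed
qed

lemma mprod_remove1: "x \<in> set ys \<Longrightarrow> remove1 x ys \<noteq> [] \<Longrightarrow>
  eqn n (mprod m \<rho> ys) (m (\<rho> x) (mprod m \<rho> (remove1 x ys)))"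
proof (induction ys)
  case Nil then show ?case by simp
next
  case (Cons y ys)
  show ?case
  proof (cases "y = x")
    case True then show ?thesis using Cons.prems by (simp add: mprod_Cons)
  next
    case False
    have xin: "x \<in> set ys" using Cons.prems False by simp
    show ?thesis
    proof (cases "remove1 x ys = []")
      case True
      have "ys = [x]" using xin True
        by (induction ys) (auto split: if_splits)
      then show ?thesis using False by (simp add: comm)
    next
      case R: False
      have ysne: "ys \<noteq> []" using xin by auto
      define Rl where "Rl = remove1 x ys"
      have "mprod m \<rho> (y # ys) = m (\<rho> y) (mprod m \<rho> ys)" using ysne by (simp add: mprod_Cons)
      also have "eqn n (m (\<rho> y) (mprod m \<rho> ys)) (m (\<rho> y) (m (\<rho> x) (mprod m \<rho> Rl)))"
        using Cons.IH[OF xin R] by (intro cgR) (simp add: Rl_def)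
      also have "eqn n (m (\<rho> y) (m (\<rho> x) (mprod m \<rho> Rl))) (m (m (\<rho> y) (\<rho> x)) (mprod m \<rho> Rl))"
        by (rule assoc)
      also have "eqn n (m (m (\<rho> y) (\<rho> x)) (mprod m \<rho> Rl)) (m (m (\<rho> x) (\<rho> y)) (mprod m \<rho> Rl))"
        by (intro cgL comm)
      also have "eqn n (m (m (\<rho> x) (\<rho> y)) (mprod m \<rho> Rl)) (m (\<rho> x) (m (\<rho> y) (mprod m \<rho> Rl)))"
        by (rule eqn_sym[OF assoc])
      also have "m (\<rho> x) (m (\<rho> y) (mprod m \<rho> Rl)) = m (\<rho> x) (mprod m \<rho> (remove1 x (y # ys)))"
        using R False by (simp add: mprod_Cons Rl_def)
      finally show ?thesis .
    qed
  qed
qed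

lemma mprod_perm: "mset xs = mset ys \<Longrightarrow> eqn n (mprod m \<rho> xs) (mprod m \<rho> ys)"
proof (induction xs arbitrary: ys)
  case Nil then show ?case by simp
next
  case (Cons x xs)
  have xin: "x \<in> set ys" using Cons.prems by (metis list.set_intros(1) set_mset_mset)
  have ms: "mset xs = mset (remove1 x ys)" using Cons.prems
    by (metis add_mset_remove_trivial mset.simps(2) mset_remove1)
  show ?case
  proof (cases "xs = []")
    case True
    then have "ys = [x]" using Cons.prems by (cases ys) auto
    then show ?thesis using True by simp
  next
    case False
    have R: "remove1 x ys \<noteq> []"
    proof
      assume "remove1 x ys = []"
      then have "mset xs = {#}" using ms by (simp only: mset.simps(1))
      then show False using False by simp
    qed
    have "mprod m \<rho> (x # xs) = m (\<rho> x) (mprod m \<rho> xs)" using False by (simp add: mprod_Cons)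
    also have "eqn n (m (\<rho> x) (mprod m \<rho> xs)) (m (\<rho> x) (mprod m \<rho> (remove1 x ys)))"
      using Cons.IH[OF ms] by (rule cgR)
    also have "eqn n (m (\<rho> x) (mprod m \<rho> (remove1 x ys))) (mprod m \<rho> ys)"
      by (rule eqn_sym[OF mprod_remove1[OF xin R]])
    finally show ?thesis .
  qed
qed

lemma evS_prod1: "xs \<noteq> [] \<Longrightarrow> (\<forall>e\<in>set L2. fst e \<noteq> []) \<Longrightarrow>
  eqn n (smult_series c (m (mprod m \<rho> xs) (evS m \<rho> L2))) (evS m \<rho> (map (\<lambda>(ys,d). (xs @ ys, c * d)) L2))"
proof (induction L2)
  case Nil
  then show ?case using eqn_smult[OF zeroR, of c] by (simp add: evS_Nil)
next
  case (Cons e L2)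
  obtain ys d where e: "e = (ys, d)" by (cases e)
  have ys: "ys \<noteq> []" using Cons.prems e by auto
  let ?M = "mprod m \<rho> xs"
  let ?A = "m ?M (mprod m \<rho> ys)"
  let ?B = "m ?M (evS m \<rho> L2)"
  have 1: "eqn n (m ?M (evS m \<rho> (e # L2))) (add_series (smult_series d ?A) ?B)"
    unfolding e evS_Cons by (rule eqn_trans[OF addR eqn_add[OF scR eqn_refl]])
  have 2: "smult_series c (add_series (smult_series d ?A) ?B) = add_series (smult_series (c * d) ?A) (smult_series c ?B)"
    by (simp add: smult_series_def add_series_def fun_eq_iff algebra_simps)
  have 3: "eqn n (add_series (smult_series (c * d) ?A) (smult_series c ?B))
     (add_series (smult_series (c * d) (mprod m \<rho> (xs @ ys))) (evS m \<rho> (map (\<lambda>(ys,d). (xs @ ys, c * d)) L2)))"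
  proof (rule eqn_add)
    show "eqn n (smult_series (c * d) ?A) (smult_series (c * d) (mprod m \<rho> (xs @ ys)))"
      by (rule eqn_smult, rule eqn_sym, rule mprod_append[OF Cons.prems(1) ys])
    show "eqn n (smult_series c ?B) (evS m \<rho> (map (\<lambda>(ys,d). (xs @ ys, c * d)) L2))"
      using Cons.IH Cons.prems by simp
  qed
  show ?case using eqn_trans[OF eqn_smult[OF 1, of c], unfolded 2, OF 3] by (simp add: e evS_Cons)
qed

lemma evS_prod: "(\<forall>e\<in>set L1. fst e \<noteq> []) \<Longrightarrow> (\<forall>e\<in>set L2. fst e \<noteq> []) \<Longrightarrow>
  eqn n (m (evS m \<rho> L1) (evS m \<rho> L2)) (evS m \<rho> (prodL L1 L2))"
proof (induction L1)
  case Nil then show ?case using zeroL by (simp add: evS_Nil)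
next
  case (Cons e L1)
  obtain xs c where e: "e = (xs, c)" by (cases e)
  have xs: "xs \<noteq> []" using Cons.prems e by auto
  let ?E = "evS m \<rho> L2"
  have "eqn n (m (evS m \<rho> (e # L1)) ?E) (add_series (m (smult_series c (mprod m \<rho> xs)) ?E) (m (evS m \<rho> L1) ?E))"
    unfolding e evS_Cons by (rule addL)
  also have "eqn n (add_series (m (smult_series c (mprod m \<rho> xs)) ?E) (m (evS m \<rho> L1) ?E))
     (add_series (smult_series c (m (mprod m \<rho> xs) ?E)) (evS m \<rho> (prodL L1 L2)))"
    using Cons by (intro eqn_add scL) auto
  also have "eqn n (add_series (smult_series c (m (mprod m \<rho> xs) ?E)) (evS m \<rho> (prodL L1 L2)))
     (add_series (evS m \<rho> (map (\<lambda>(ys,d). (xs @ ys, c * d)) L2)) (evS m \<rho> (prodL L1 L2)))"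
    using Cons.prems xs by (intro eqn_add evS_prod1) auto
  also have "add_series (evS m \<rho> (map (\<lambda>(ys,d). (xs @ ys, c * d)) L2)) (evS m \<rho> (prodL L1 L2))
     = evS m \<rho> (prodL (e # L1) L2)"
    by (simp add: e evS_append)
  finally show ?case .
qed

lemma nf_nonempty': "\<forall>e\<in>set (nf u). fst e \<noteq> []"
  using nf_nonempty by fastforce

lemma sem_evS: "eqn n (sem m \<rho> u) (evS m \<rho> (nf u))"
proof (induction u)
  case (Var v)
  have "evS m \<rho> (nf (Var v)) = \<rho> v" by (simp add: evS_def)
  then show ?case by simp
next
  case Zero then show ?case by (simp add: evS_Nil)
next
  case (Scal c u) then show ?case by (simp add: evS_scale eqn_smult)
next
  case (Plus u v) then show ?case by (simp add: evS_append eqn_add)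
next
  case (Times u v)
  show ?case using eqn_trans[OF cg[OF Times.IH] evS_prod[OF nf_nonempty' nf_nonempty']] by simp
qed

lemma evS_same: "(\<forall>e\<in>set S. mset (fst e) = mset xs) \<Longrightarrow> length w \<le> n \<Longrightarrow>
   evS m \<rho> S w = sum_list (map snd S) * mprod m \<rho> xs w"
proof (induction S)
  case Nil then show ?case by (simp add: evS_def)
next
  case (Cons e S)
  obtain ys d where e: "e = (ys, d)" by (cases e)
  have "mprod m \<rho> ys w = mprod m \<rho> xs w"
    using mprod_perm[of ys xs \<rho>] Cons.prems e by (auto simp: eqn_def)
  then show ?case using Cons by (simp add: e evS_def algebra_simps)
qed

lemma evS_zero: "(\<forall>e\<in>set L. fst e \<noteq> []) \<Longrightarrow> toP L = 0 \<Longrightarrow> eqn n (evS m \<rho> L) zero_series"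
proof (induction "length L" arbitrary: L rule: less_induct)
  case less
  show ?case
  proof (cases L)
    case Nil then show ?thesis by (simp add: evS_Nil)
  next
    case (Cons e L')
    obtain xs c where e: "e = (xs, c)" by (cases e)
    define p where "p = (\<lambda>e'::'b list \<times> rat. mon (fst e') = mon xs)"
    define S where "S = filter p L"
    define R where "R = filter (\<lambda>e'. \<not> p e') L"
    have tL: "toP L = toP S + toP R" unfolding S_def R_def by (rule toP_partition)
    have lR: "Poly_Mapping.lookup (toP R) (mon xs) = 0"
      by (rule lookup_toP_other) (auto simp: R_def p_def)
    have tS: "toP S = Poly_Mapping.single (mon xs) (sum_list (map snd S))"
      by (rule toP_same) (auto simp: S_def p_def)
    have sum0: "sum_list (map snd S) = 0"
      using arg_cong[OF tL, of "\<lambda>q. Poly_Mapping.lookup q (mon xs)"] less.prems(2) lR tS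
      by (simp add: lookup_add)
    then have "toP S = 0" using tS by simp
    then have tR: "toP R = 0" using tL less.prems(2) by simp
    have lenR: "length R < length L"
      unfolding R_def by (rule length_filter_less[of e]) (auto simp: Cons e p_def)
    have eR: "eqn n (evS m \<rho> R) zero_series"
      using less.hyps[OF lenR _ tR] less.prems(1) by (auto simp: R_def)
    have eS: "evS m \<rho> S w = 0" if "length w \<le> n" for w
    proof -
      have "\<forall>e\<in>set S. mset (fst e) = mset xs" by (auto simp: S_def p_def intro: mon_mset)
      from evS_same[OF this that] show ?thesis using sum0 by simp
    qed
    show ?thesis unfolding eqn_def
    proof (intro allI impI)
      fix w :: "'a list" assume "length w \<le> n"
      then show "evS m \<rho> L w = zero_series w"
        using evS_partition[of m \<rho> L w p] eS eR by (simp add: S_def R_def eqn_def zero_series_def)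
    qed
  qed
qed

lemma sem_poly: "poly_of u = poly_of v \<Longrightarrow> eqn n (sem m \<rho> u) (sem m \<rho> v)"
proof -
  assume pe: "poly_of u = poly_of v"
  define L where "L = nf u @ negL (nf v)"
  have "toP L = 0" using pe by (simp add: L_def toP_neg toP_nf)
  moreover have "\<forall>e\<in>set L. fst e \<noteq> []" using nf_nonempty by (fastforce simp: L_def negL_def)
  ultimately have z: "eqn n (evS m \<rho> L) zero_series" by (intro evS_zero)
  have "evS m \<rho> (nf u) w = evS m \<rho> (nf v) w" if "length w \<le> n" for w
    using z that by (simp add: eqn_def L_def evS_append add_series_def evS_neg zero_series_def)
  then show ?thesis using sem_evS[of \<rho> u] sem_evS[of \<rho> v] by (simp add: eqn_def)
qed

end

lemma evQ_inst: "evQ \<rho>0 (inst P s1 s2 s3 s4) =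
  evQ (\<lambda>v. case v of PX \<Rightarrow> evQ \<rho>0 s1 | PDX \<Rightarrow> evQ \<rho>0 s2 | PY \<Rightarrow> evQ \<rho>0 s3 | PDY \<Rightarrow> evQ \<rho>0 s4) P"
  unfolding inst_def evQ_subst by (rule arg_cong[where f="\<lambda>r. evQ r P"]) (auto split: pvar.split)

lemma sem_inst: "sem m \<sigma> (inst P s1 s2 s3 s4) =
  sem m (\<lambda>v. case v of PX \<Rightarrow> sem m \<sigma> s1 | PDX \<Rightarrow> sem m \<sigma> s2 | PY \<Rightarrow> sem m \<sigma> s3 | PDY \<Rightarrow> sem m \<sigma> s4) P"
  unfolding inst_def sem_subst by (rule arg_cong[where f="\<lambda>r. sem m r P"]) (auto split: pvar.split)

lemma Pprod_nil: "Pproduct P f g [] = f [] * g []"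
  by (metis Pproduct_is isP_alt)

lemma Pprod_lderiv: "lderiv a (Pproduct P f g) = sem (Pproduct P) (rho a f g) P"
  by (metis Pproduct_is isP_alt)

lemma Pprod_cons: "Pproduct P f g (a # w) = sem (Pproduct P) (rho a f g) P w"
  using fun_cong[OF Pprod_lderiv[of a P f g], of w] by (simp add: lderiv_def)

lemma Pprod_one: "Pproduct P f g [a] =
   evQ (\<lambda>v. case v of PX \<Rightarrow> f [] | PDX \<Rightarrow> f [a] | PY \<Rightarrow> g [] | PDY \<Rightarrow> g [a]) P"
proof -
  have "Pproduct P f g [a] = evQ (\<lambda>v. rho a f g v []) P"
    using Pprod_cons[of P f g a "[]"] sem_nil[of "Pproduct P", OF Pprod_nil] by simp
  also have "(\<lambda>v. rho a f g v []) = (\<lambda>v. case v of PX \<Rightarrow> f [] | PDX \<Rightarrow> f [a] | PY \<Rightarrow> g [] | PDY \<Rightarrow> g [a])"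
    by (auto simp: rho_def lderiv_def split: pvar.split)
  finally show ?thesis .
qed

definition ser :: "(svar \<Rightarrow> rat) \<Rightarrow> svar \<Rightarrow> svar \<Rightarrow> 'a series" where
  "ser \<rho>0 s d = (\<lambda>w. if w = [] then \<rho>0 s else \<rho>0 d)"

lemma BAC_special:
  assumes B: "BAC (Pproduct P :: 'a series \<Rightarrow> 'a series \<Rightarrow> 'a series)"
  shows "special P"
proof -
  let ?m = "Pproduct P :: 'a series \<Rightarrow> 'a series \<Rightarrow> 'a series"
  define a :: 'a where "a = undefined"
  have Badd: "?m (add_series f g) h = add_series (?m f h) (?m g h)" for f g h using B unfolding BAC_def by blast
  have Bass: "?m f (?m g h) = ?m (?m f g) h" for f g h using B unfolding BAC_def by blast
  have Bcom: "?m f g = ?m g f" for f g using B unfolding BAC_def by blast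
  have e1: "evQ \<rho>0 (inst P (Plus (Var SX) (Var SY)) (Plus (Var SDX) (Var SDY)) (Var SZ) (Var SDZ)) =
            evQ \<rho>0 (Plus (inst P (Var SX) (Var SDX) (Var SZ) (Var SDZ)) (inst P (Var SY) (Var SDY) (Var SZ) (Var SDZ)))" for \<rho>0
  proof -
    let ?f = "ser \<rho>0 SX SDX :: 'a series" and ?g = "ser \<rho>0 SY SDY :: 'a series" and ?h = "ser \<rho>0 SZ SDZ :: 'a series"
    have "evQ \<rho>0 (inst P (Plus (Var SX) (Var SY)) (Plus (Var SDX) (Var SDY)) (Var SZ) (Var SDZ)) = ?m (add_series ?f ?g) ?h [a]"
      by (simp add: evQ_inst Pprod_one ser_def add_series_def)
    also have "\<dots> = add_series (?m ?f ?h) (?m ?g ?h) [a]" by (simp add: Badd)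
    also have "\<dots> = evQ \<rho>0 (Plus (inst P (Var SX) (Var SDX) (Var SZ) (Var SDZ)) (inst P (Var SY) (Var SDY) (Var SZ) (Var SDZ)))"
      by (simp add: evQ_inst Pprod_one ser_def add_series_def)
    finally show ?thesis .
  qed
  have e2: "evQ \<rho>0 (inst P (Var SX) (Var SDX) (Times (Var SY) (Var SZ)) (inst P (Var SY) (Var SDY) (Var SZ) (Var SDZ))) =
            evQ \<rho>0 (inst P (Times (Var SX) (Var SY)) (inst P (Var SX) (Var SDX) (Var SY) (Var SDY)) (Var SZ) (Var SDZ))" for \<rho>0
  proof -
    let ?f = "ser \<rho>0 SX SDX :: 'a series" and ?g = "ser \<rho>0 SY SDY :: 'a series" and ?h = "ser \<rho>0 SZ SDZ :: 'a series"
    have "evQ \<rho>0 (inst P (Var SX) (Var SDX) (Times (Var SY) (Var SZ)) (inst P (Var SY) (Var SDY) (Var SZ) (Var SDZ))) = ?m ?f (?m ?g ?h) [a]"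
      by (simp add: evQ_inst Pprod_one Pprod_nil ser_def)
    also have "\<dots> = ?m (?m ?f ?g) ?h [a]" by (simp add: Bass)
    also have "\<dots> = evQ \<rho>0 (inst P (Times (Var SX) (Var SY)) (inst P (Var SX) (Var SDX) (Var SY) (Var SDY)) (Var SZ) (Var SDZ))"
      by (simp add: evQ_inst Pprod_one Pprod_nil ser_def)
    finally show ?thesis .
  qed
  have e3: "evQ \<rho>0 (inst P (Var SX) (Var SDX) (Var SY) (Var SDY)) = evQ \<rho>0 (inst P (Var SY) (Var SDY) (Var SX) (Var SDX))" for \<rho>0
  proof -
    let ?f = "ser \<rho>0 SX SDX :: 'a series" and ?g = "ser \<rho>0 SY SDY :: 'a series"
    have "evQ \<rho>0 (inst P (Var SX) (Var SDX) (Var SY) (Var SDY)) = ?m ?f ?g [a]"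
      by (simp add: evQ_inst Pprod_one ser_def)
    also have "\<dots> = ?m ?g ?f [a]" by (simp add: Bcom)
    also have "\<dots> = evQ \<rho>0 (inst P (Var SY) (Var SDY) (Var SX) (Var SDX))"
      by (simp add: evQ_inst Pprod_one ser_def)
    finally show ?thesis .
  qed
  show ?thesis unfolding special_def term_equiv_def
    using poly_of_eqI[OF e1] poly_of_eqI[OF e2] poly_of_eqI[OF e3] by blast
qed

lemma additive_homog:
  fixes F :: "'a series \<Rightarrow> rat"
  assumes add: "\<And>f g. F (add_series f g) = F f + F g"
  shows "F (smult_series c f) = c * F f"
proof -
  have sm: "smult_series a (smult_series b f) = smult_series (a * b) f" for a b f
    by (simp add: smult_series_def fun_eq_iff)
  have "add_series zero_series zero_series = (zero_series :: 'a series)"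
    by (simp add: add_series_def zero_series_def)
  then have z: "F zero_series = 0" using add[of zero_series zero_series] by simp
  have nat: "F (smult_series (of_nat k) f) = of_nat k * F f" for k f
  proof (induction k)
    case 0 then show ?case using z by simp
  next
    case (Suc k)
    have "smult_series (of_nat (Suc k)) f = add_series f (smult_series (of_nat k) f)"
      by (simp add: smult_series_def add_series_def fun_eq_iff algebra_simps)
    then show ?case using Suc add by (simp add: algebra_simps)
  qed
  have negF: "F (smult_series (- b) f) = - F (smult_series b f)" for b f
  proof -
    have "add_series (smult_series (- b) f) (smult_series b f) = zero_series"
      by (simp add: smult_series_def add_series_def zero_series_def fun_eq_iff)
    then show ?thesis using add[of "smult_series (- b) f" "smult_series b f"] z by simp
  qed
  have int: "F (smult_series (of_int i) f) = of_int i * F f" for i f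
  proof (cases i rule: int_cases)
    case (nonneg k) then show ?thesis using nat[of k f] by simp
  next
    case (neg k)
    have i: "(of_int i :: rat) = - of_nat (Suc k)" using neg by simp
    have "F (smult_series (of_int i) f) = F (smult_series (- of_nat (Suc k)) f)" by (simp only: i)
    also have "\<dots> = - F (smult_series (of_nat (Suc k)) f)" by (rule negF)
    also have "\<dots> = - (of_nat (Suc k) * F f)" by (simp only: nat)
    also have "\<dots> = of_int i * F f" by (simp only: i)
    finally show ?thesis .
  qed
  obtain p q where pq: "quotient_of c = (p, q)" by (cases "quotient_of c")
  have c: "c = of_int p / of_int q" by (rule quotient_of_div[OF pq])
  have q: "q > 0" by (rule quotient_of_denom_pos[OF pq])
  have "of_int q * F (smult_series c f) = F (smult_series (of_int q) (smult_series c f))"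
    using int by simp
  also have "\<dots> = F (smult_series (of_int p) f)" using q by (simp add: sm c)
  also have "\<dots> = of_int p * F f" using int by simp
  finally have "of_int q * F (smult_series c f) = of_int p * F f" .
  then show ?thesis using q by (simp add: c field_simps)
qed

lemma lderiv_add[simp]: "lderiv a (add_series f g) = add_series (lderiv a f) (lderiv a g)"
  by (simp add: lderiv_def add_series_def)

definition sig :: "'a \<Rightarrow> 'a series \<Rightarrow> 'a series \<Rightarrow> 'a series \<Rightarrow> svar \<Rightarrow> 'a series" where
  "sig a f g h = (\<lambda>v. case v of SX \<Rightarrow> f | SDX \<Rightarrow> lderiv a f | SY \<Rightarrow> g | SDY \<Rightarrow> lderiv a g
                          | SZ \<Rightarrow> h | SDZ \<Rightarrow> lderiv a h)"

lemma nalg_all: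
  assumes sp: "special P"
  shows "nalg n (Pproduct P :: 'a series \<Rightarrow> 'a series \<Rightarrow> 'a series)"
proof (induction n)
  case 0
  show ?case
    by unfold_locales (auto simp: eqn_def Pprod_nil add_series_def smult_series_def algebra_simps
        intro: Pcong)
next
  case (Suc n)
  let ?m = "Pproduct P :: 'a series \<Rightarrow> 'a series \<Rightarrow> 'a series"
  interpret N: nalg n ?m by (rule Suc.IH)
  have S1: "poly_of (inst P (Plus (Var SX) (Var SY)) (Plus (Var SDX) (Var SDY)) (Var SZ) (Var SDZ)) =
            poly_of (Plus (inst P (Var SX) (Var SDX) (Var SZ) (Var SDZ)) (inst P (Var SY) (Var SDY) (Var SZ) (Var SDZ)))"
   and S2: "poly_of (inst P (Var SX) (Var SDX) (Times (Var SY) (Var SZ)) (inst P (Var SY) (Var SDY) (Var SZ) (Var SDZ))) =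
            poly_of (inst P (Times (Var SX) (Var SY)) (inst P (Var SX) (Var SDX) (Var SY) (Var SDY)) (Var SZ) (Var SDZ))"
   and S3: "poly_of (inst P (Var SX) (Var SDX) (Var SY) (Var SDY)) = poly_of (inst P (Var SY) (Var SDY) (Var SX) (Var SDX))"
    using sp unfolding special_def term_equiv_def by blast+
  have addS: "?m (add_series f g) h w' = add_series (?m f h) (?m g h) w'" if "length w' \<le> Suc n" for f g h w'
  proof (cases w')
    case Nil then show ?thesis by (simp add: Pprod_nil add_series_def algebra_simps)
  next
    case (Cons a w)
    have l: "length w \<le> n" using that Cons by simp
    let ?s = "sig a f g h"
    have "?m (add_series f g) h w' = sem ?m ?s (inst P (Plus (Var SX) (Var SY)) (Plus (Var SDX) (Var SDY)) (Var SZ) (Var SDZ)) w"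
      by (simp add: Cons Pprod_cons sem_inst sig_def rho_def cong: pvar.case_cong)
    also have "\<dots> = sem ?m ?s (Plus (inst P (Var SX) (Var SDX) (Var SZ) (Var SDZ)) (inst P (Var SY) (Var SDY) (Var SZ) (Var SDZ))) w"
      using N.sem_poly[OF S1, where \<rho>="?s"] l by (simp add: eqn_def)
    also have "\<dots> = add_series (?m f h) (?m g h) w'"
      by (simp add: Cons Pprod_cons sem_inst sig_def rho_def add_series_def cong: pvar.case_cong)
    finally show ?thesis .
  qed
  have assS: "?m f (?m g h) w' = ?m (?m f g) h w'" if "length w' \<le> Suc n" for f g h w'
  proof (cases w')
    case Nil then show ?thesis by (simp add: Pprod_nil algebra_simps)
  next
    case (Cons a w)
    have l: "length w \<le> n" using that Cons by simp
    let ?s = "sig a f g h"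
    have "?m f (?m g h) w' = sem ?m ?s (inst P (Var SX) (Var SDX) (Times (Var SY) (Var SZ)) (inst P (Var SY) (Var SDY) (Var SZ) (Var SDZ))) w"
      by (simp add: Cons Pprod_cons sem_inst sig_def rho_def Pprod_lderiv cong: pvar.case_cong)
    also have "\<dots> = sem ?m ?s (inst P (Times (Var SX) (Var SY)) (inst P (Var SX) (Var SDX) (Var SY) (Var SDY)) (Var SZ) (Var SDZ)) w"
      using N.sem_poly[OF S2, where \<rho>="?s"] l by (simp add: eqn_def)
    also have "\<dots> = ?m (?m f g) h w'"
      by (simp add: Cons Pprod_cons sem_inst sig_def rho_def Pprod_lderiv cong: pvar.case_cong)
    finally show ?thesis .
  qed
  have comS: "?m f g w' = ?m g f w'" if "length w' \<le> Suc n" for f g w'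
  proof (cases w')
    case Nil then show ?thesis by (simp add: Pprod_nil algebra_simps)
  next
    case (Cons a w)
    have l: "length w \<le> n" using that Cons by simp
    let ?s = "sig a f g f"
    have "?m f g w' = sem ?m ?s (inst P (Var SX) (Var SDX) (Var SY) (Var SDY)) w"
      by (simp add: Cons Pprod_cons sem_inst sig_def rho_def cong: pvar.case_cong)
    also have "\<dots> = sem ?m ?s (inst P (Var SY) (Var SDY) (Var SX) (Var SDX)) w"
      using N.sem_poly[OF S3, where \<rho>="?s"] l by (simp add: eqn_def)
    also have "\<dots> = ?m g f w'"
      by (simp add: Cons Pprod_cons sem_inst sig_def rho_def cong: pvar.case_cong)
    finally show ?thesis .
  qed
  have scS: "?m (smult_series c f) g w' = smult_series c (?m f g) w'" if "length w' \<le> Suc n" for c f g w'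
  proof -
    have "(\<lambda>f. ?m f g w') (smult_series c f) = c * (\<lambda>f. ?m f g w') f"
      by (rule additive_homog, rule addS[OF that, THEN trans]) (simp add: add_series_def)
    then show ?thesis by (simp add: smult_series_def)
  qed
  show ?case
  proof
    show "eqn (Suc n) (?m X Y) (?m X' Y')" if "eqn (Suc n) X X'" "eqn (Suc n) Y Y'" for X X' Y Y'
      using that by (rule Pcong)
    show "eqn (Suc n) (?m (add_series f g) h) (add_series (?m f h) (?m g h))" for f g h
      unfolding eqn_def using addS by blast
    show "eqn (Suc n) (?m (smult_series c f) g) (smult_series c (?m f g))" for c f g
      unfolding eqn_def using scS by blast
    show "eqn (Suc n) (?m f (?m g h)) (?m (?m f g) h)" for f g h
      unfolding eqn_def using assS by blast
    show "eqn (Suc n) (?m f g) (?m g f)" for f g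
      unfolding eqn_def using comS by blast
  qed
qed

lemma special_BAC:
  assumes "special P"
  shows "BAC (Pproduct P :: 'a series \<Rightarrow> 'a series \<Rightarrow> 'a series)"
proof -
  let ?m = "Pproduct P :: 'a series \<Rightarrow> 'a series \<Rightarrow> 'a series"
  have E: "X = Y" if "\<And>n. eqn n X Y" for X Y :: "'a series"
    using that by (auto simp: eqn_def fun_eq_iff)
  have N: "nalg n ?m" for n using nalg_all[OF assms] .
  show ?thesis unfolding BAC_def
  proof (intro conjI allI)
    show "?m (add_series f g) h = add_series (?m f h) (?m g h)" for f g h
      by (rule E, rule nalg.addL[OF N])
    show "?m (smult_series c f) g = smult_series c (?m f g)" for c f g
      by (rule E, rule nalg.scL[OF N])
    show "?m f (?m g h) = ?m (?m f g) h" for f g h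
      by (rule E, rule nalg.assoc[OF N])
    show "?m f g = ?m g f" for f g
      by (rule E, rule nalg.comm[OF N])
  qed
qed

theorem theorem1:
  fixes P :: prule
  shows "BAC (Pproduct P :: ('a::finite) series \<Rightarrow> 'a series \<Rightarrow> 'a series) \<longleftrightarrow> special P"
  using BAC_special special_BAC by blast

end
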